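(* Let $D$ be a $3$-dicritical digraph on $n$ vertices that is isomorphic to neither $\overleftrightarrow{K_3}$ nor $\vec{W_3}$. Then $D$ has at most $\binom{n}{2}+\frac{2}{3}n$ arcs.
   Context: Digraphs are finite, with no loops and no parallel arcs (digons, i.e. pairs $uv,vu$, are allowed). A $2$-dicolouring of $D$ is a map $V(D)\to\{1,2\}$ such that each colour class induces an acyclic subdigraph (a digon is a directed cycle). $D$ is $3$-dicritical if $D$ has no $2$-dicolouring but every proper subdigraph has one. $\overleftrightarrow{K_3}$ is the digraph on 3 vertices with all 6 arcs. $\vec{W_3}$ consists of a directed triangle $a\to b\to c\to a$ and a vertex $r$ joined by a digon to each of $a,b,c$. *)

theory Defs
  imports Complex_Main
begin

text \<open>Parallel arcs are excluded automatically since A is a set of pairs;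
  digons (u,v),(v,u) are allowed.\<close>

definition is_digraph :: "'a set \<Rightarrow> ('a \<times> 'a) set \<Rightarrow> bool" where
  "is_digraph V A \<longleftrightarrow> finite V \<and> A \<subseteq> V \<times> V \<and> (\<forall>v. (v, v) \<notin> A)"

definition induced_arcs :: "('a \<times> 'a) set \<Rightarrow> 'a set \<Rightarrow> ('a \<times> 'a) set" where
  "induced_arcs A S = A \<inter> (S \<times> S)"

text \<open>A 2-dicolouring: a map V \<rightarrow> {1,2} such that each colour class induces an
  acyclic subdigraph (a digon counts as a directed cycle).\<close>
definition is_2_dicolouring :: "'a set \<Rightarrow> ('a \<times> 'a) set \<Rightarrow> ('a \<Rightarrow> nat) \<Rightarrow> bool" where
  "is_2_dicolouring V A c \<longleftrightarrow> c ` V \<subseteq> {1, 2} \<and>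
     (\<forall>i \<in> {1, 2::nat}. acyclic (induced_arcs A {v \<in> V. c v = i}))"

definition two_dicolourable :: "'a set \<Rightarrow> ('a \<times> 'a) set \<Rightarrow> bool" where
  "two_dicolourable V A \<longleftrightarrow> (\<exists>c. is_2_dicolouring V A c)"

definition is_subdigraph :: "'a set \<Rightarrow> ('a \<times> 'a) set \<Rightarrow> 'a set \<Rightarrow> ('a \<times> 'a) set \<Rightarrow> bool" where
  "is_subdigraph V' A' V A \<longleftrightarrow> V' \<subseteq> V \<and> A' \<subseteq> A \<and> A' \<subseteq> V' \<times> V'"

definition three_dicritical :: "'a set \<Rightarrow> ('a \<times> 'a) set \<Rightarrow> bool" where
  "three_dicritical V A \<longleftrightarrow> is_digraph V A \<and> \<not> two_dicolourable V A \<and>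
     (\<forall>V' A'. is_subdigraph V' A' V A \<and> (V', A') \<noteq> (V, A) \<longrightarrow> two_dicolourable V' A')"

definition digraph_iso :: "'a set \<Rightarrow> ('a \<times> 'a) set \<Rightarrow> 'b set \<Rightarrow> ('b \<times> 'b) set \<Rightarrow> bool" where
  "digraph_iso V A W B \<longleftrightarrow> (\<exists>f. bij_betw f V W \<and>
     (\<forall>u \<in> V. \<forall>v \<in> V. (u, v) \<in> A \<longleftrightarrow> (f u, f v) \<in> B))"

definition K3_V :: "nat set" where "K3_V = {0, 1, 2}"
definition K3_A :: "(nat \<times> nat) set" where "K3_A = {(u, v). u \<in> K3_V \<and> v \<in> K3_V \<and> u \<noteq> v}"

definition W3_V :: "nat set" where "W3_V = {0, 1, 2, 3}"
definition W3_A :: "(nat \<times> nat) set" where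
  "W3_A = {(0, 1), (1, 2), (2, 0), (3, 0), (0, 3), (3, 1), (1, 3), (3, 2), (2, 3)}"

end

theory Submission
  imports Defs
begin

lemma half_card:
  assumes "finite W" "\<And>x y. (x,y) \<in> W \<Longrightarrow> (y,x) \<in> W"
    "\<And>x y. (x,y) \<in> R \<Longrightarrow> (y,x) \<notin> R"
  shows "2 * card (R \<inter> W) \<le> card W"
proof -
  let ?S = "R \<inter> W"
  have fS: "finite ?S" using assms(1) by auto
  have sub: "?S \<union> converse ?S \<subseteq> W" using assms(2) by auto
  have disj: "?S \<inter> converse ?S = {}" using assms(3) by auto
  have "card (?S \<union> converse ?S) = card ?S + card (converse ?S)"
    using fS disj by (simp add: card_Un_disjoint)
  also have "card (converse ?S) = card ?S" by simp
  finally have "card (?S \<union> converse ?S) = 2 * card ?S" by simp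
  moreover have "card (?S \<union> converse ?S) \<le> card W" using card_mono[OF assms(1) sub] .
  ultimately show ?thesis by simp
qed

lemma forest_card:
  fixes E :: "('a \<times> 'a) set" and f0 :: "'a \<Rightarrow> bool"
  assumes "finite K" "K \<noteq> {}" "E \<subseteq> K \<times> K"
    "\<And>x y. (x,y) \<in> E \<Longrightarrow> (y,x) \<in> E"
    "\<And>x y. (x,y) \<in> E \<Longrightarrow> f0 x \<noteq> f0 y"
    "\<And>u v. (u,v) \<in> E \<Longrightarrow> \<exists>h::'a\<Rightarrow>bool. h u = h v \<and> (\<forall>x y. (x,y) \<in> E \<longrightarrow> {x,y} \<noteq> {u,v} \<longrightarrow> h x \<noteq> h y)"
  shows "card E + 2 \<le> 2 * card K"
  using assms
proof (induct "card K" arbitrary: K E rule: less_induct)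
  case less
  show ?case
  proof (cases "E = {}")
    case True
    have "card K > 0" using less.prems(1,2) by (simp add: card_gt_0_iff)
    then show ?thesis using True by simp
  next
    case False
    then obtain u v where uv: "(u,v) \<in> E" by auto
    obtain h :: "'a \<Rightarrow> bool" where h: "h u = h v" "\<forall>x y. (x,y) \<in> E \<longrightarrow> {x,y} \<noteq> {u,v} \<longrightarrow> h x \<noteq> h y"
      using less.prems(6)[OF uv] by blast
    have fuv: "f0 u \<noteq> f0 v" using less.prems(5)[OF uv] .
    have uK: "u \<in> K" "v \<in> K" using uv less.prems(3) by auto
    define K0 where "K0 = {x \<in> K. h x = f0 x}"
    define K1 where "K1 = {x \<in> K. h x \<noteq> f0 x}"
    define E0 where "E0 = E \<inter> K0 \<times> K0"
    define E1 where "E1 = E \<inter> K1 \<times> K1"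
    have splitE: "E = E0 \<union> E1 \<union> {(u,v),(v,u)}"
    proof
      show "E \<subseteq> E0 \<union> E1 \<union> {(u,v),(v,u)}"
      proof
        fix p assume p: "p \<in> E"
        obtain x y where pxy: "p = (x,y)" by (cases p)
        show "p \<in> E0 \<union> E1 \<union> {(u,v),(v,u)}"
        proof (cases "{x,y} = {u,v}")
          case True
          then show ?thesis using pxy by (auto simp: doubleton_eq_iff)
        next
          case False
          then have "h x \<noteq> h y" using h(2) p pxy by auto
          moreover have "f0 x \<noteq> f0 y" using less.prems(5) p pxy by auto
          moreover have "x \<in> K" "y \<in> K" using p pxy less.prems(3) by auto
          ultimately show ?thesis using p pxy unfolding E0_def E1_def K0_def K1_def by auto
        qed
      qed
    next
      show "E0 \<union> E1 \<union> {(u,v),(v,u)} \<subseteq> E"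
        using uv less.prems(4) unfolding E0_def E1_def by auto
    qed
    have uv_not: "(u,v) \<notin> E0 \<union> E1" "(v,u) \<notin> E0 \<union> E1"
      using h(1) fuv unfolding E0_def E1_def K0_def K1_def by auto
    have uneq: "u \<noteq> v" using fuv by auto
    have fE: "finite E" using less.prems(1,3) finite_subset by blast
    have disj01: "E0 \<inter> E1 = {}" unfolding E0_def E1_def K0_def K1_def by auto
    have cardE: "card E = card E0 + card E1 + 2"
    proof -
      have "card E = card (E0 \<union> E1) + card {(u,v),(v,u)}"
        apply (subst splitE)
        apply (rule card_Un_disjoint)
        using fE splitE uv_not by (auto intro: finite_subset)
      moreover have "card (E0 \<union> E1) = card E0 + card E1"
        apply (rule card_Un_disjoint) using fE disj01 unfolding E0_def E1_def by auto
      moreover have "card {(u,v),(v,u)} = 2" using uneq by auto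
      ultimately show ?thesis by simp
    qed
    have "u \<in> K0 \<and> v \<in> K1 \<or> u \<in> K1 \<and> v \<in> K0"
      using h(1) fuv uK unfolding K0_def K1_def by (cases "h u"; cases "f0 u"; cases "f0 v"; simp)
    then have K0ne: "K0 \<noteq> {}" and K1ne: "K1 \<noteq> {}" by auto
    have K01: "K = K0 \<union> K1" "K0 \<inter> K1 = {}" unfolding K0_def K1_def by auto
    have cK: "card K = card K0 + card K1"
      using K01 less.prems(1) by (simp add: card_Un_disjoint)
    have fK0: "finite K0" "finite K1" using K01 less.prems(1) by auto
    have lt0: "card K0 < card K" using cK K1ne fK0 by (simp add: card_gt_0_iff)
    have lt1: "card K1 < card K" using cK K0ne fK0 by (simp add: card_gt_0_iff)
    have IH0: "card E0 + 2 \<le> 2 * card K0"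
      apply (rule less.hyps[OF lt0 fK0(1) K0ne])
      subgoal unfolding E0_def by auto
      subgoal using less.prems(4) unfolding E0_def by auto
      subgoal using less.prems(5) unfolding E0_def by auto
      subgoal for a b
      proof -
        assume ab: "(a,b) \<in> E0"
        then have "(a,b) \<in> E" unfolding E0_def by simp
        then obtain h' :: "'a \<Rightarrow> bool" where h': "h' a = h' b" "\<forall>x y. (x,y) \<in> E \<longrightarrow> {x,y} \<noteq> {a,b} \<longrightarrow> h' x \<noteq> h' y"
          using less.prems(6)[of a b] by blast
        have "\<forall>x y. (x,y) \<in> E0 \<longrightarrow> {x,y} \<noteq> {a,b} \<longrightarrow> h' x \<noteq> h' y"
          using h'(2) unfolding E0_def by simp
        then show ?thesis using h'(1) by blast
      qed
      done
    have IH1: "card E1 + 2 \<le> 2 * card K1"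
      apply (rule less.hyps[OF lt1 fK0(2) K1ne])
      subgoal unfolding E1_def by auto
      subgoal using less.prems(4) unfolding E1_def by auto
      subgoal using less.prems(5) unfolding E1_def by auto
      subgoal for a b
      proof -
        assume ab: "(a,b) \<in> E1"
        then have "(a,b) \<in> E" unfolding E1_def by simp
        then obtain h' :: "'a \<Rightarrow> bool" where h': "h' a = h' b" "\<forall>x y. (x,y) \<in> E \<longrightarrow> {x,y} \<noteq> {a,b} \<longrightarrow> h' x \<noteq> h' y"
          using less.prems(6)[of a b] by blast
        have "\<forall>x y. (x,y) \<in> E1 \<longrightarrow> {x,y} \<noteq> {a,b} \<longrightarrow> h' x \<noteq> h' y"
          using h'(2) unfolding E1_def by simp
        then show ?thesis using h'(1) by blast
      qed
      done
    show ?thesis using cardE cK IH0 IH1 by simp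
  qed
qed

lemma offdiag_card:
  assumes "finite S"
  shows "card {(x,y). x \<in> S \<and> y \<in> S \<and> x \<noteq> y} = card S * card S - card S"
proof -
  have eq: "{(x,y). x \<in> S \<and> y \<in> S \<and> x \<noteq> y} = S \<times> S - Id_on S" by (auto simp: Id_on_def)
  have "card (Id_on S) = card S"
  proof -
    have "Id_on S = (\<lambda>x. (x,x)) ` S" by (auto simp: Id_on_def)
    moreover have "inj_on (\<lambda>x. (x,x)) S" by (auto simp: inj_on_def)
    ultimately show ?thesis by (simp add: card_image)
  qed
  moreover have "Id_on S \<subseteq> S \<times> S" by auto
  ultimately show ?thesis using eq assms by (simp add: card_Diff_subset card_cartesian_product finite_subset)
qed

lemma antisym_card:
  assumes "finite S" "R \<subseteq> S \<times> S" "\<And>x y. (x,y) \<in> R \<Longrightarrow> (y,x) \<notin> R"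
  shows "2 * card R \<le> card S * card S - card S"
proof -
  let ?W = "{(x,y). x \<in> S \<and> y \<in> S \<and> x \<noteq> y}"
  have "R \<inter> ?W = R" using assms(2,3) by auto
  moreover have "2 * card (R \<inter> ?W) \<le> card ?W"
    apply (rule half_card) using assms apply auto
    apply (rule finite_subset[of _ "S \<times> S"]) by auto
  ultimately show ?thesis using offdiag_card[OF assms(1)] by simp
qed

lemma card_ins_le: "card (insert x A) \<le> Suc (card A)"
  by (cases "finite A") (auto simp: card_insert_if)

lemma triple_card:
  fixes R :: "('a \<times> 'a) set"
  assumes "finite S" "R \<subseteq> S \<times> S" "\<And>x y. (x,y) \<in> R \<Longrightarrow> (y,x) \<notin> R"
    "\<And>x y z. x\<in>S \<Longrightarrow> y\<in>S \<Longrightarrow> z\<in>S \<Longrightarrow> x\<noteq>y \<Longrightarrow> y\<noteq>z \<Longrightarrow> x\<noteq>z \<Longrightarrow>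
       (x,y)\<in>R \<or> (y,x)\<in>R \<Longrightarrow> (y,z)\<in>R \<or> (z,y)\<in>R \<Longrightarrow> (x,z)\<in>R \<or> (z,x)\<in>R \<Longrightarrow> False"
  shows "6 * card R + 5 * card S \<le> 3 * card S * card S + 4"
  using assms
proof (induct "card S" arbitrary: S R rule: less_induct)
  case less
  show ?case
  proof (cases "card S \<le> 2")
    case True
    have "2 * card R \<le> card S * card S - card S"
      using antisym_card[OF less.prems(1,2,3)] .
    moreover have "card S \<le> card S * card S" by simp
    ultimately have hh: "2 * card R \<le> card S * card S - card S" by simp
    have "card S = 0 \<or> card S = 1 \<or> card S = 2" using True by auto
    then show ?thesis using hh by (elim disjE) simp_all
  next
    case False
    have fS: "finite S" using less.prems(1) .
    obtain a where a: "a \<in> S" using False by fastforce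
    have "card (S - {a}) \<ge> 2" using False a fS by auto
    then have "S - {a} \<noteq> {}" by (cases "S - {a} = {}") auto
    then obtain b where b: "b \<in> S - {a}" by blast
    have "card (S - {a} - {b}) \<ge> 1" using False a b fS by auto
    then have "S - {a} - {b} \<noteq> {}" by (cases "S - {a} - {b} = {}") auto
    then obtain c where c: "c \<in> S - {a} - {b}" by blast
    have dist: "a \<noteq> b" "b \<noteq> c" "a \<noteq> c" using b c by auto
    have abcS: "a \<in> S" "b \<in> S" "c \<in> S" using a b c by auto
    define adj where "adj x y \<longleftrightarrow> (x,y) \<in> R \<or> (y,x) \<in> R" for x y
    have nadj: "\<not> (adj a b \<and> adj b c \<and> adj a c)"
      using less.prems(4)[OF abcS dist] unfolding adj_def by blast
    obtain p q r where pqr: "{p,q,r} = {a,b,c}" "p \<noteq> q" "q \<noteq> r" "p \<noteq> r" "\<not> adj p q"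
    proof -
      consider "\<not> adj a b" | "\<not> adj b c" | "\<not> adj a c" using nadj by blast
      then show ?thesis
      proof cases
        case 1 then show ?thesis using that[of a b c] dist by auto
      next
        case 2 then show ?thesis using that[of b c a] dist by auto
      next
        case 3 then show ?thesis using that[of a c b] dist by auto
      qed
    qed
    define T where "T = {a,b,c}"
    define S' where "S' = S - T"
    define R' where "R' = R \<inter> S' \<times> S'"
    define W1 where "W1 = T \<times> S' \<union> S' \<times> T"
    define W2 where "W2 = {(p,r),(r,p),(q,r),(r,q)}"
    have cardT: "card T = 3" using dist unfolding T_def by auto
    have TS: "T \<subseteq> S" using abcS unfolding T_def by auto
    have cS: "card S = card S' + 3"
    proof -
      have "finite T" unfolding T_def by simp
      then have "card S' = card S - card T" unfolding S'_def using card_Diff_subset[of T S] TS by simp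
      moreover have "card T \<le> card S" using card_mono[OF fS TS] .
      ultimately show ?thesis using cardT by simp
    qed
    have fS': "finite S'" using fS unfolding S'_def by auto
    have IH: "6 * card R' + 5 * card S' \<le> 3 * card S' * card S' + 4"
      apply (rule less.hyps)
      subgoal using cS by simp
      subgoal using fS' .
      subgoal unfolding R'_def by auto
      subgoal using less.prems(3) unfolding R'_def by auto
      subgoal for x y z apply (rule less.prems(4)[of x y z]) unfolding R'_def S'_def by auto
      done
    have cover: "R \<subseteq> R' \<union> (R \<inter> W1) \<union> (R \<inter> W2)"
    proof
      fix e assume e: "e \<in> R"
      obtain x y where exy: "e = (x,y)" by (cases e)
      have xy: "x \<in> S" "y \<in> S" using e exy less.prems(2) by auto
      have xney: "x \<noteq> y" using e exy less.prems(3) by auto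
      show "e \<in> R' \<union> (R \<inter> W1) \<union> (R \<inter> W2)"
      proof (cases "x \<in> T \<and> y \<in> T")
        case True
        have "adj x y" using e exy unfolding adj_def by auto
        then have "{x,y} \<noteq> {p,q}" using pqr(5) unfolding adj_def by (auto simp: doubleton_eq_iff)
        moreover have "x \<in> {p,q,r}" "y \<in> {p,q,r}" using True pqr(1) unfolding T_def by auto
        ultimately have "e \<in> W2" using exy xney unfolding W2_def by auto
        then show ?thesis using e by auto
      next
        case False
        then show ?thesis using e exy xy unfolding R'_def W1_def S'_def by auto
      qed
    qed
    have fW1: "finite W1" using fS' unfolding W1_def T_def by auto
    have cW1: "card W1 \<le> 6 * card S'"
    proof -
      have "card W1 \<le> card (T \<times> S') + card (S' \<times> T)" unfolding W1_def by (rule card_Un_le)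
      also have "\<dots> = 6 * card S'" using cardT by (simp add: card_cartesian_product)
      finally show ?thesis .
    qed
    have h1: "2 * card (R \<inter> W1) \<le> card W1"
      apply (rule half_card[OF fW1]) using less.prems(3) unfolding W1_def by auto
    have cW2: "card W2 \<le> 4" unfolding W2_def by (rule order_trans[OF card_ins_le], rule order_trans[OF Suc_le_mono[THEN iffD2, OF card_ins_le]], rule order_trans[OF Suc_le_mono[THEN iffD2, OF Suc_le_mono[THEN iffD2, OF card_ins_le]]], simp)
    have h2: "2 * card (R \<inter> W2) \<le> card W2"
      apply (rule half_card) using less.prems(3) unfolding W2_def by auto
    have fR: "finite R" using less.prems(2) fS by (meson finite_SigmaI finite_subset)
    have "card R \<le> card (R' \<union> (R \<inter> W1) \<union> (R \<inter> W2))"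
      apply (rule card_mono[OF _ cover]) using fR unfolding R'_def by auto
    also have "\<dots> \<le> card R' + card (R \<inter> W1) + card (R \<inter> W2)"
      by (rule order_trans[OF card_Un_le add_le_mono1[OF card_Un_le]])
    finally have cR: "card R \<le> card R' + card (R \<inter> W1) + card (R \<inter> W2)" .
    have sq: "card S * card S = card S' * card S' + 6 * card S' + 9" using cS by (simp add: algebra_simps)
    show ?thesis using cR IH h1 h2 cW1 cW2 cS sq by linarith
  qed
qed

lemma avg_sum:
  fixes g :: "'a \<Rightarrow> real"
  assumes "finite V" "\<And>x. x \<in> V \<Longrightarrow> x \<in> K x" "\<And>x. x \<in> V \<Longrightarrow> K x \<subseteq> V"
    "\<And>x y. x \<in> V \<Longrightarrow> y \<in> K x \<Longrightarrow> K y = K x"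
  shows "(\<Sum>x\<in>V. g x) = (\<Sum>x\<in>V. (\<Sum>y\<in>K x. g y) / card (K x))"
proof -
  have "(\<Sum>x\<in>V. (\<Sum>y\<in>K x. g y) / card (K x)) = (\<Sum>x\<in>V. \<Sum>y\<in>K x. g y / card (K y))"
  proof (rule sum.cong[OF refl])
    fix x assume x: "x \<in> V"
    have "(\<Sum>y\<in>K x. g y) / card (K x) = (\<Sum>y\<in>K x. g y / card (K x))" by (simp add: sum_divide_distrib)
    also have "\<dots> = (\<Sum>y\<in>K x. g y / card (K y))"
    proof (rule sum.cong[OF refl])
      fix y assume "y \<in> K x"
      then have "K y = K x" using assms(4)[OF x] by blast
      then show "g y / card (K x) = g y / card (K y)" by simp
    qed
    finally show "(\<Sum>y\<in>K x. g y) / card (K x) = (\<Sum>y\<in>K x. g y / card (K y))" .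
  qed
  also have "\<dots> = (\<Sum>x\<in>V. \<Sum>y\<in>V. if y \<in> K x then g y / card (K y) else 0)"
  proof (rule sum.cong[OF refl])
    fix x assume x: "x \<in> V"
    have "K x = V \<inter> K x" using assms(3)[OF x] by auto
    then show "(\<Sum>y\<in>K x. g y / card (K y)) = (\<Sum>y\<in>V. if y \<in> K x then g y / card (K y) else 0)"
      using sum.inter_restrict[OF assms(1), of "\<lambda>y. g y / card (K y)" "K x"] by simp
  qed
  also have "\<dots> = (\<Sum>y\<in>V. \<Sum>x\<in>V. if y \<in> K x then g y / card (K y) else 0)" by (rule sum.swap)
  also have "\<dots> = (\<Sum>y\<in>V. g y)"
  proof (rule sum.cong[OF refl])
    fix y assume y: "y \<in> V"
    have eq: "{x \<in> V. y \<in> K x} = K y"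
    proof
      show "{x \<in> V. y \<in> K x} \<subseteq> K y"
      proof
        fix x assume "x \<in> {x \<in> V. y \<in> K x}"
        then have "x \<in> V" "y \<in> K x" by auto
        then have "K y = K x" using assms(4) by blast
        then show "x \<in> K y" using assms(2) \<open>x \<in> V\<close> by simp
      qed
      show "K y \<subseteq> {x \<in> V. y \<in> K x}"
      proof
        fix x assume "x \<in> K y"
        have xV: "x \<in> V" using \<open>x \<in> K y\<close> assms(3)[OF y] by blast
        have "K x = K y" using assms(4)[OF y \<open>x \<in> K y\<close>] .
        then have "K x = K y" "x \<in> V" using xV by auto
        then show "x \<in> {x \<in> V. y \<in> K x}" using assms(2) y by auto
      qed
    qed
    have fK: "finite (K y)" using assms(1,3) y finite_subset by blast
    have pos: "card (K y) > 0" using fK assms(2)[OF y] card_gt_0_iff by blast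
    have "(\<Sum>x\<in>V. if y \<in> K x then g y / card (K y) else 0) = (\<Sum>x\<in>{x \<in> V. y \<in> K x}. g y / card (K y))"
      using sum.inter_restrict[OF assms(1), of "\<lambda>x. g y / card (K y)" "{x. y \<in> K x}"]
      by (simp add: Int_def)
    also have "\<dots> = card (K y) * (g y / card (K y))" using eq by simp
    also have "\<dots> = g y" using pos by simp
    finally show "(\<Sum>x\<in>V. if y \<in> K x then g y / card (K y) else 0) = g y" .
  qed
  finally show ?thesis by simp
qed

lemma tdc_basic:
  assumes "three_dicritical V A"
  shows "finite V" "A \<subseteq> V \<times> V" "(v,v) \<notin> A" "\<not> two_dicolourable V A"
  using assms unfolding three_dicritical_def is_digraph_def by auto

lemma tdc_del_arc:
  assumes "three_dicritical V A" "a \<in> A"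
  shows "two_dicolourable V (A - {a})"
proof -
  have "is_subdigraph V (A - {a}) V A" using tdc_basic(2)[OF assms(1)] unfolding is_subdigraph_def by auto
  moreover have "(V, A - {a}) \<noteq> (V, A)" using assms(2) by auto
  ultimately show ?thesis using assms(1) unfolding three_dicritical_def by blast
qed

lemma tdc_del_vertex:
  assumes "three_dicritical V A" "v \<in> V"
  shows "two_dicolourable (V - {v}) (A \<inter> (V - {v}) \<times> (V - {v}))"
proof -
  have "is_subdigraph (V - {v}) (A \<inter> (V - {v}) \<times> (V - {v})) V A" unfolding is_subdigraph_def by auto
  moreover have "(V - {v}, A \<inter> (V - {v}) \<times> (V - {v})) \<noteq> (V, A)" using assms(2) by auto
  ultimately show ?thesis using assms(1) unfolding three_dicritical_def by blast
qed

lemma col_vals: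
  assumes "is_2_dicolouring W B c" "x \<in> W"
  shows "c x = 1 \<or> c x = 2"
  using assms unfolding is_2_dicolouring_def by auto

lemma col_digon:
  assumes "is_2_dicolouring W B c" "(x,y) \<in> B" "(y,x) \<in> B" "x \<in> W" "y \<in> W"
  shows "c x \<noteq> c y"
proof
  assume eq: "c x = c y"
  let ?S = "{v \<in> W. c v = c x}"
  have i: "c x \<in> {1,2}" using col_vals[OF assms(1,4)] by auto
  have "(x,y) \<in> induced_arcs B ?S" "(y,x) \<in> induced_arcs B ?S"
    using assms eq unfolding induced_arcs_def by auto
  then have "(x,x) \<in> (induced_arcs B ?S)\<^sup>+" by (meson trancl.simps)
  then have "\<not> acyclic (induced_arcs B ?S)" unfolding acyclic_def by blast
  then show False using assms(1) i unfolding is_2_dicolouring_def by blast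
qed

lemma col_extend:
  assumes "is_2_dicolouring V (A - {(x,y)}) c" "c x \<noteq> c y"
  shows "is_2_dicolouring V A c"
proof -
  have "\<And>i. induced_arcs A {v \<in> V. c v = i} = induced_arcs (A - {(x,y)}) {v \<in> V. c v = i}"
    using assms(2) unfolding induced_arcs_def by auto
  then show ?thesis using assms(1) unfolding is_2_dicolouring_def by simp
qed

lemma acyclic_insert_tr:
  assumes "acyclic R" "(x,y) \<in> R\<^sup>+"
  shows "acyclic (insert (x,y) R)"
proof -
  have "(y,x) \<notin> R\<^sup>*"
  proof
    assume "(y,x) \<in> R\<^sup>*"
    then have "(y,y) \<in> R\<^sup>+" using assms(2) by (meson rtrancl_trancl_trancl)
    then show False using assms(1) unfolding acyclic_def by blast
  qed
  then show ?thesis using assms(1) by (simp add: acyclic_insert)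
qed

lemma col_bypass:
  assumes "is_2_dicolouring V (A - {(x,y)}) c" "c x = c z" "c y = c z"
    "(x,z) \<in> A" "(z,y) \<in> A" "x \<noteq> z" "z \<noteq> y" "x \<in> V" "y \<in> V" "z \<in> V"
  shows "is_2_dicolouring V A c"
  unfolding is_2_dicolouring_def
proof (intro conjI ballI)
  show "c ` V \<subseteq> {1,2}" using assms(1) unfolding is_2_dicolouring_def by simp
  fix i :: nat assume i: "i \<in> {1,2}"
  let ?S = "{v \<in> V. c v = i}"
  let ?R = "induced_arcs (A - {(x,y)}) ?S"
  have acR: "acyclic ?R" using assms(1) i unfolding is_2_dicolouring_def by blast
  show "acyclic (induced_arcs A ?S)"
  proof (cases "c x = i")
    case False
    then have "induced_arcs A ?S = ?R" unfolding induced_arcs_def by auto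
    then show ?thesis using acR by simp
  next
    case True
    have "(x,z) \<in> ?R" "(z,y) \<in> ?R" using assms True unfolding induced_arcs_def by auto
    then have "(x,y) \<in> ?R\<^sup>+" by auto
    then have "acyclic (insert (x,y) ?R)" using acyclic_insert_tr[OF acR] by blast
    moreover have "induced_arcs A ?S \<subseteq> insert (x,y) ?R" unfolding induced_arcs_def by auto
    ultimately show ?thesis using acyclic_subset by blast
  qed
qed


definition digs :: "('a \<times> 'a) set \<Rightarrow> ('a \<times> 'a) set" where
  "digs A = {(x,y). (x,y) \<in> A \<and> (y,x) \<in> A}"

definition props :: "('a \<times> 'a) set \<Rightarrow> ('a \<Rightarrow> bool) set" where
  "props A = {f. \<forall>x y. (x,y) \<in> digs A \<longrightarrow> f x \<noteq> f y}"

definition fsame :: "('a \<times> 'a) set \<Rightarrow> 'a \<Rightarrow> 'a \<Rightarrow> bool" where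
  "fsame A x y \<longleftrightarrow> (\<forall>f\<in>props A. f x = f y)"

definition fdiff :: "('a \<times> 'a) set \<Rightarrow> 'a \<Rightarrow> 'a \<Rightarrow> bool" where
  "fdiff A x y \<longleftrightarrow> (\<forall>f\<in>props A. f x \<noteq> f y)"

lemma col_bool_eq:
  assumes "is_2_dicolouring W B c" "x \<in> W" "y \<in> W"
  shows "(c x = 1) = (c y = 1) \<longleftrightarrow> c x = c y"
  using col_vals[OF assms(1,2)] col_vals[OF assms(1,3)] by auto

lemma fact1:
  assumes tdc: "three_dicritical V A" and xy: "(x,y) \<in> A" "(y,x) \<notin> A"
  shows "\<exists>c. is_2_dicolouring V (A - {(x,y)}) c \<and> c x = c y \<and> (\<lambda>v. c v = 1) \<in> props A"
proof -
  obtain c where c: "is_2_dicolouring V (A - {(x,y)}) c"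
    using tdc_del_arc[OF tdc xy(1)] unfolding two_dicolourable_def by blast
  have cxy: "c x = c y"
  proof (rule ccontr)
    assume "c x \<noteq> c y"
    then have "is_2_dicolouring V A c" using col_extend[OF c] by blast
    then show False using tdc_basic(4)[OF tdc] unfolding two_dicolourable_def by blast
  qed
  have "(\<lambda>v. c v = 1) \<in> props A"
    unfolding props_def
  proof (intro CollectI allI impI)
    fix a b assume ab: "(a,b) \<in> digs A"
    then have ab2: "(a,b) \<in> A - {(x,y)}" "(b,a) \<in> A - {(x,y)}" using xy unfolding digs_def by auto
    have abV: "a \<in> V" "b \<in> V" using ab2 tdc_basic(2)[OF tdc] by auto
    have "c a \<noteq> c b" using col_digon[OF c ab2 abV] .
    then show "(c a = 1) \<noteq> (c b = 1)" using col_bool_eq[OF c abV] by simp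
  qed
  then show ?thesis using c cxy by blast
qed

lemma fact1F:
  assumes tdc: "three_dicritical V A" and xy: "(x,y) \<in> A" "(y,x) \<notin> A"
  shows "\<exists>f\<in>props A. f x = f y"
proof -
  obtain c where "is_2_dicolouring V (A - {(x,y)}) c" "c x = c y" "(\<lambda>v. c v = 1) \<in> props A"
    using fact1[OF assms] by blast
  then show ?thesis by (intro bexI[of _ "\<lambda>v. c v = 1"]) auto
qed

lemma fact2:
  assumes tdc: "three_dicritical V A" and uv: "(u,v) \<in> digs A"
  shows "\<exists>h::'a\<Rightarrow>bool. h u = h v \<and> (\<forall>a b. (a,b) \<in> digs A \<longrightarrow> {a,b} \<noteq> {u,v} \<longrightarrow> h a \<noteq> h b)"
proof -
  have uvA: "(u,v) \<in> A" using uv unfolding digs_def by auto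
  obtain c where c: "is_2_dicolouring V (A - {(u,v)}) c"
    using tdc_del_arc[OF tdc uvA] unfolding two_dicolourable_def by blast
  have cuv: "c u = c v"
  proof (rule ccontr)
    assume "c u \<noteq> c v"
    then have "is_2_dicolouring V A c" using col_extend[OF c] by blast
    then show False using tdc_basic(4)[OF tdc] unfolding two_dicolourable_def by blast
  qed
  have "\<forall>a b. (a,b) \<in> digs A \<longrightarrow> {a,b} \<noteq> {u,v} \<longrightarrow> (c a = 1) \<noteq> (c b = 1)"
  proof (intro allI impI)
    fix a b assume ab: "(a,b) \<in> digs A" "{a,b} \<noteq> {u,v}"
    then have ab2: "(a,b) \<in> A - {(u,v)}" "(b,a) \<in> A - {(u,v)}" unfolding digs_def by auto
    have abV: "a \<in> V" "b \<in> V" using ab2 tdc_basic(2)[OF tdc] by auto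
    have "c a \<noteq> c b" using col_digon[OF c ab2 abV] .
    then show "(c a = 1) \<noteq> (c b = 1)" using col_bool_eq[OF c abV] by simp
  qed
  then show ?thesis using cuv by (intro exI[of _ "\<lambda>v. c v = 1"]) simp
qed

lemma digs_diff:
  assumes "(x,y) \<in> digs A" "f \<in> props A"
  shows "f x \<noteq> f y"
  using assms unfolding props_def by auto

lemma same_not_dig:
  assumes "props A \<noteq> {}" "fsame A x y"
  shows "(x,y) \<notin> digs A"
proof
  assume d: "(x,y) \<in> digs A"
  obtain f where f: "f \<in> props A" using assms(1) by blast
  have "f x = f y" using assms(2) f unfolding fsame_def by blast
  moreover have "f x \<noteq> f y" using digs_diff[OF d f] .
  ultimately show False by simp
qed

lemma C5:
  assumes tdc: "three_dicritical V A" and F: "props A \<noteq> {}"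
    and V: "x \<in> V" "y \<in> V" "z \<in> V"
    and s: "fsame A x y" "fsame A x z"
    and arcs: "(x,y) \<in> A" "(x,z) \<in> A" "(z,y) \<in> A"
  shows False
proof -
  have irr: "x \<noteq> z" "z \<noteq> y" using arcs tdc_basic(3)[OF tdc] by auto
  have "(y,x) \<notin> A" using same_not_dig[OF F s(1)] arcs(1) unfolding digs_def by auto
  then obtain c where c: "is_2_dicolouring V (A - {(x,y)}) c" "c x = c y" "(\<lambda>v. c v = 1) \<in> props A"
    using fact1[OF tdc arcs(1)] by blast
  have "(c x = 1) = (c z = 1)" using s(2) c(3) unfolding fsame_def by (rule bspec[where x="\<lambda>v. c v = 1"])
  then have cxz: "c x = c z" using col_bool_eq[OF c(1) V(1) V(3)] by simp
  have "is_2_dicolouring V A c"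
    using col_bypass[OF c(1) cxz _ arcs(2,3) irr V] c(2) cxz by simp
  then show False using tdc_basic(4)[OF tdc] unfolding two_dicolourable_def by blast
qed

lemma C6:
  assumes tdc: "three_dicritical V A" 
    and V: "x \<in> V" "y \<in> V" "z \<in> V"
    and s: "fsame A x y" "fsame A x z"
    and arcs: "(x,y) \<in> A" "(y,z) \<in> A" "(z,x) \<in> A"
    and ab: "(a,b) \<in> A" "(b,a) \<notin> A"
  shows "(a,b) \<in> {(x,y),(y,z),(z,x)}"
proof (rule ccontr)
  assume nt: "(a,b) \<notin> {(x,y),(y,z),(z,x)}"
  obtain c where c: "is_2_dicolouring V (A - {(a,b)}) c" "(\<lambda>v. c v = 1) \<in> props A"
    using fact1[OF tdc ab] by blast
  have "(c x = 1) = (c y = 1)" using s(1) c(2) unfolding fsame_def by (rule bspec[where x="\<lambda>v. c v = 1"])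
  moreover have "(c x = 1) = (c z = 1)" using s(2) c(2) unfolding fsame_def by (rule bspec[where x="\<lambda>v. c v = 1"])
  ultimately have cc: "c x = c y" "c x = c z" using col_bool_eq[OF c(1)] V by auto
  let ?S = "{v \<in> V. c v = c x}"
  let ?R = "induced_arcs (A - {(a,b)}) ?S"
  have "(x,y) \<in> ?R" "(y,z) \<in> ?R" "(z,x) \<in> ?R" using arcs nt V cc unfolding induced_arcs_def by auto
  then have "(x,x) \<in> ?R\<^sup>+" by (meson r_into_trancl trancl_trans)
  then have "\<not> acyclic ?R" unfolding acyclic_def by blast
  moreover have "c x \<in> {1,2}" using col_vals[OF c(1) V(1)] by auto
  ultimately show False using c(1) unfolding is_2_dicolouring_def by blast
qed

lemma card_A_le:
  assumes "three_dicritical V A"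
  shows "card A \<le> card V * card V - card V"
proof -
  have "A \<subseteq> {(x,y). x \<in> V \<and> y \<in> V \<and> x \<noteq> y}" using tdc_basic(2,3)[OF assms] by auto
  then have "card A \<le> card {(x,y). x \<in> V \<and> y \<in> V \<and> x \<noteq> y}"
    by (rule card_mono[rotated]) (rule finite_subset[of _ "V \<times> V"], auto simp: tdc_basic(1)[OF assms])
  then show ?thesis using offdiag_card[OF tdc_basic(1)[OF assms]] by simp
qed

lemma small_case:
  assumes "three_dicritical V A" "card V \<le> 2"
  shows "real (card A) \<le> real (card V choose 2) + 2 / 3 * real (card V)"
proof -
  have c: "card A \<le> card V * card V - card V" using card_A_le[OF assms(1)] .
  have "card V = 0 \<or> card V = 1 \<or> card V = 2" using assms(2) by auto
  then show ?thesis using c by (elim disjE) auto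
qed

lemma k3_iso:
  assumes "V = {x,y,z}" "x \<noteq> y" "y \<noteq> z" "x \<noteq> z"
    "A = {(a,b). a \<in> V \<and> b \<in> V \<and> a \<noteq> b}"
  shows "digraph_iso V A K3_V K3_A"
proof -
  define f where "f v = (if v = x then 0 else if v = y then 1 else (2::nat))" for v
  have "bij_betw f V K3_V"
    unfolding bij_betw_def inj_on_def K3_V_def f_def using assms(1-4) by auto
  moreover have "\<forall>u\<in>V. \<forall>v\<in>V. (u, v) \<in> A \<longleftrightarrow> (f u, f v) \<in> K3_A"
    unfolding K3_A_def K3_V_def f_def using assms by auto
  ultimately show ?thesis unfolding digraph_iso_def by blast
qed

lemma sum_del_card:
  assumes "finite V" "D \<subseteq> V \<times> V" "\<And>x y. (x,y) \<in> D \<Longrightarrow> x \<noteq> y"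
  shows "(\<Sum>v\<in>V. card (D \<inter> (V - {v}) \<times> (V - {v}))) = (card V - 2) * card D"
proof -
  have fD: "finite D" using assms(1,2) finite_subset by blast
  have "(\<Sum>v\<in>V. card (D \<inter> (V - {v}) \<times> (V - {v}))) =
        (\<Sum>v\<in>V. \<Sum>p\<in>D. if p \<in> (V - {v}) \<times> (V - {v}) then 1 else (0::nat))"
  proof (rule sum.cong[OF refl])
    fix v assume "v \<in> V"
    have "card (D \<inter> (V - {v}) \<times> (V - {v})) = (\<Sum>p\<in>D \<inter> (V - {v}) \<times> (V - {v}). (1::nat))" by simp
    also have "\<dots> = (\<Sum>p\<in>D. if p \<in> (V - {v}) \<times> (V - {v}) then 1 else 0)"
      by (rule sum.inter_restrict[OF fD])
    finally show "card (D \<inter> (V - {v}) \<times> (V - {v})) = (\<Sum>p\<in>D. if p \<in> (V - {v}) \<times> (V - {v}) then 1 else 0)" .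
  qed
  also have "\<dots> = (\<Sum>p\<in>D. \<Sum>v\<in>V. if p \<in> (V - {v}) \<times> (V - {v}) then 1 else (0::nat))"
    by (rule sum.swap)
  also have "\<dots> = (\<Sum>p\<in>D. card V - 2)"
  proof (rule sum.cong[OF refl])
    fix p assume pD: "p \<in> D"
    obtain a b where p: "p = (a,b)" by (cases p)
    have ab: "a \<in> V" "b \<in> V" "a \<noteq> b" using pD p assms(2,3) by auto
    have "(\<Sum>v\<in>V. if p \<in> (V - {v}) \<times> (V - {v}) then 1 else (0::nat)) = (\<Sum>v\<in>V \<inter> {v. p \<in> (V - {v}) \<times> (V - {v})}. 1)"
      using sum.inter_restrict[OF assms(1), of "\<lambda>_. (1::nat)" "{v. p \<in> (V - {v}) \<times> (V - {v})}"] by simp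
    also have "V \<inter> {v. p \<in> (V - {v}) \<times> (V - {v})} = V - {a,b}" using p ab by auto
    also have "(\<Sum>v\<in>V - {a,b}. (1::nat)) = card (V - {a,b})" by simp
    also have "\<dots> = card V - 2" using ab assms(1) by (simp add: card_Diff_subset)
    finally show "(\<Sum>v\<in>V. if p \<in> (V - {v}) \<times> (V - {v}) then 1 else (0::nat)) = card V - 2" .
  qed
  also have "\<dots> = (card V - 2) * card D" by simp
  finally show ?thesis .
qed

lemma vertex_del_bound:
  assumes tdc: "three_dicritical V A" and v: "v \<in> V"
  shows "\<exists>x y. x + y = card V - 1 \<and> card (digs A \<inter> (V - {v}) \<times> (V - {v})) \<le> 2 * x * y"
proof -
  let ?W = "V - {v}"
  obtain c where c: "is_2_dicolouring ?W (A \<inter> ?W \<times> ?W) c"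
    using tdc_del_vertex[OF tdc v] unfolding two_dicolourable_def by blast
  define X where "X = {w \<in> ?W. c w = 1}"
  define Y where "Y = {w \<in> ?W. c w \<noteq> 1}"
  have fV: "finite V" using tdc_basic(1)[OF tdc] .
  have XY: "X \<union> Y = ?W" "X \<inter> Y = {}" unfolding X_def Y_def by auto
  have fXY: "finite X" "finite Y" using fV unfolding X_def Y_def by auto
  have cXY: "card X + card Y = card V - 1"
    using card_Un_disjoint[OF fXY XY(2)] XY(1) fV v by simp
  have sub: "digs A \<inter> ?W \<times> ?W \<subseteq> X \<times> Y \<union> Y \<times> X"
  proof
    fix p assume p: "p \<in> digs A \<inter> ?W \<times> ?W"
    obtain a b where ab: "p = (a,b)" by (cases p)
    have "(a,b) \<in> A \<inter> ?W \<times> ?W" "(b,a) \<in> A \<inter> ?W \<times> ?W" "a \<in> ?W" "b \<in> ?W"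
      using p ab unfolding digs_def by auto
    then have "c a \<noteq> c b" using col_digon[OF c] by blast
    moreover have "c a = 1 \<or> c a = 2" "c b = 1 \<or> c b = 2" using col_vals[OF c] \<open>a \<in> ?W\<close> \<open>b \<in> ?W\<close> by auto
    ultimately show "p \<in> X \<times> Y \<union> Y \<times> X" using ab \<open>a \<in> ?W\<close> \<open>b \<in> ?W\<close> unfolding X_def Y_def by auto
  qed
  have "card (digs A \<inter> ?W \<times> ?W) \<le> card (X \<times> Y \<union> Y \<times> X)"
    using card_mono[OF _ sub] fXY by auto
  also have "\<dots> \<le> card (X \<times> Y) + card (Y \<times> X)" by (rule card_Un_le)
  also have "\<dots> = 2 * card X * card Y" by (simp add: card_cartesian_product)
  finally show ?thesis using cXY by blast
qed


lemma real_choose2: "real (n choose 2) = real n * (real n - 1) / 2"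
proof (induct n)
  case 0 then show ?case by simp
next
  case (Suc n)
  have "(Suc n choose 2) = (n choose 1) + (n choose 2)"
    by (metis Suc_1 binomial_Suc_Suc)
  then show ?case using Suc by (simp add: field_simps)
qed

lemma digs_eq_A:
  assumes tdc: "three_dicritical V A" and F: "props A = {}"
  shows "digs A = A"
proof
  show "digs A \<subseteq> A" unfolding digs_def by auto
  show "A \<subseteq> digs A"
  proof
    fix p assume p: "p \<in> A"
    obtain x y where xy: "p = (x,y)" by (cases p)
    have "(y,x) \<in> A"
    proof (rule ccontr)
      assume "(y,x) \<notin> A"
      then have "\<exists>f\<in>props A. f x = f y" using fact1F[OF tdc] p xy by blast
      then show False using F by blast
    qed
    then show "p \<in> digs A" using p xy unfolding digs_def by auto
  qed
qed

lemma n3_case: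
  assumes tdc: "three_dicritical V A" and n3: "card V = 3"
    and niso: "\<not> digraph_iso V A K3_V K3_A"
  shows "real (card A) \<le> real (card V choose 2) + 2 / 3 * real (card V)"
proof -
  have fV: "finite V" using tdc_basic(1)[OF tdc] .
  let ?O = "{(a,b). a \<in> V \<and> b \<in> V \<and> a \<noteq> b}"
  have AO: "A \<subseteq> ?O" using tdc_basic(2,3)[OF tdc] by auto
  have fO: "finite ?O" by (rule finite_subset[of _ "V \<times> V"]) (auto simp: fV)
  have cO: "card ?O = 6" using offdiag_card[OF fV] n3 by simp
  have "card A \<le> 5"
  proof (rule ccontr)
    assume "\<not> card A \<le> 5"
    then have "card A = card ?O" using card_mono[OF fO AO] cO by simp
    then have AeqO: "A = ?O" using card_subset_eq[OF fO AO] by simp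
    obtain x y z where V: "V = {x,y,z}" "x \<noteq> y" "y \<noteq> z" "x \<noteq> z" using n3 card_3_iff by metis
    have "digraph_iso V A K3_V K3_A" using k3_iso[OF V AeqO] .
    then show False using niso by simp
  qed
  then show ?thesis using n3 by (simp add: real_choose2)
qed

lemma case_noF:
  assumes tdc: "three_dicritical V A" and F: "props A = {}"
    and niso: "\<not> digraph_iso V A K3_V K3_A"
  shows "real (card A) \<le> real (card V choose 2) + 2 / 3 * real (card V)"
proof -
  have fV: "finite V" using tdc_basic(1)[OF tdc] .
  have AD: "digs A = A" using digs_eq_A[OF tdc F] .
  consider "card V \<le> 2" | "card V = 3" | "card V \<ge> 4" by linarith
  then show ?thesis
  proof cases
    case 1 then show ?thesis using small_case[OF tdc] by blast
  next
    case 2 then show ?thesis using n3_case[OF tdc _ niso] by blast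
  next
    case 3
    define n where "n = card V"
    have sumeq: "(\<Sum>v\<in>V. card (digs A \<inter> (V - {v}) \<times> (V - {v}))) = (n - 2) * card A"
    proof -
      have irr: "\<And>x y. (x,y) \<in> A \<Longrightarrow> x \<noteq> y" using tdc_basic(3)[OF tdc] by blast
      show ?thesis unfolding n_def AD by (rule sum_del_card[OF fV tdc_basic(2)[OF tdc] irr])
    qed
    have each: "\<And>v. v \<in> V \<Longrightarrow> real (card (digs A \<inter> (V - {v}) \<times> (V - {v}))) \<le> (real n - 1)^2 / 2
        \<and> (n = 4 \<longrightarrow> card (digs A \<inter> (V - {v}) \<times> (V - {v})) \<le> 4)"
    proof -
      fix v assume v: "v \<in> V"
      obtain x y where xy: "x + y = n - 1" "card (digs A \<inter> (V - {v}) \<times> (V - {v})) \<le> 2 * x * y"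
        using vertex_del_bound[OF tdc v] unfolding n_def by blast
      have r1: "real x + real y = real n - 1" using xy(1) 3 unfolding n_def by linarith
      have "real (card (digs A \<inter> (V - {v}) \<times> (V - {v}))) \<le> real (2 * x * y)"
        using xy(2) by (simp only: of_nat_le_iff)
      also have "\<dots> = 2 * real x * real y" by simp
      also have "\<dots> \<le> (real x + real y)^2 / 2"
      proof -
        have e: "(real x + real y)^2 / 2 - 2 * real x * real y = (real x - real y)^2 / 2"
          by (simp add: power2_eq_square algebra_simps)
        have "(real x - real y)^2 \<ge> 0" by simp
        then show ?thesis using e by linarith
      qed
      finally have a1: "real (card (digs A \<inter> (V - {v}) \<times> (V - {v}))) \<le> (real n - 1)^2 / 2" using r1 by simp
      have a2: "n = 4 \<longrightarrow> card (digs A \<inter> (V - {v}) \<times> (V - {v})) \<le> 4"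
      proof
        assume "n = 4"
        then have "x + y = 3" using xy(1) by simp
        then have "x = 0 \<and> y = 3 \<or> x = 1 \<and> y = 2 \<or> x = 2 \<and> y = 1 \<or> x = 3 \<and> y = 0" by linarith
        then have "x * y \<le> 2" by (elim disjE) simp_all
        then show "card (digs A \<inter> (V - {v}) \<times> (V - {v})) \<le> 4" using xy(2) by simp
      qed
      show "real (card (digs A \<inter> (V - {v}) \<times> (V - {v}))) \<le> (real n - 1)^2 / 2
        \<and> (n = 4 \<longrightarrow> card (digs A \<inter> (V - {v}) \<times> (V - {v})) \<le> 4)" using a1 a2 by blast
    qed
    show ?thesis
    proof (cases "n = 4")
      case True
      have "(\<Sum>v\<in>V. card (digs A \<inter> (V - {v}) \<times> (V - {v}))) \<le> (\<Sum>v\<in>V. 4)"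
        by (rule sum_mono) (use each True in blast)
      then have "2 * card A \<le> 16" using sumeq True unfolding n_def by simp
      then show ?thesis using True unfolding n_def by (simp add: real_choose2)
    next
      case False
      then have n5: "n \<ge> 5" using 3 unfolding n_def by simp
      have "real ((n - 2) * card A) = (\<Sum>v\<in>V. real (card (digs A \<inter> (V - {v}) \<times> (V - {v}))))"
        by (simp only: sumeq[symmetric] of_nat_sum)
      also have "\<dots> \<le> (\<Sum>v\<in>V. (real n - 1)^2 / 2)" by (rule sum_mono) (use each in blast)
      also have "\<dots> = real n * (real n - 1)^2 / 2" unfolding n_def by simp
      finally have h: "(real n - 2) * real (card A) \<le> real n * (real n - 1)^2 / 2"
        using n5 by (simp add: of_nat_diff)
      define B where "B = real n * (real n - 1) / 2 + 2 / 3 * real n"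
      have "real n * (real n - 1)^2 / 2 \<le> (real n - 2) * B"
      proof -
        have "(real n - 2) * B - real n * (real n - 1)^2 / 2 = real n * (real n - 5) / 6"
          unfolding B_def power2_eq_square by (simp add: field_simps)
        moreover have "real n * (real n - 5) / 6 \<ge> 0" using n5 by simp
        ultimately show ?thesis by linarith
      qed
      then have "(real n - 2) * real (card A) \<le> (real n - 2) * B" using h by linarith
      then have "real (card A) \<le> B" using n5 by (simp add: mult_le_cancel_left)
      then show ?thesis unfolding B_def n_def by (simp add: real_choose2)
    qed
  qed
qed

lemma fsame_refl: "fsame A x x" unfolding fsame_def by simp
lemma fsame_sym:
  assumes "fsame A x y" shows "fsame A y x"
  unfolding fsame_def
proof
  fix f assume f: "f \<in> props A"
  have "f x = f y" using assms f unfolding fsame_def by blast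
  then show "f y = f x" by simp
qed
lemma fdiff_sym:
  assumes "fdiff A x y" shows "fdiff A y x"
  unfolding fdiff_def
proof
  fix f assume f: "f \<in> props A"
  have "f x \<noteq> f y" using assms f unfolding fdiff_def by blast
  then show "f y \<noteq> f x" by simp
qed
lemma fsame_trans:
  assumes "fsame A x y" "fsame A y z" shows "fsame A x z"
  unfolding fsame_def
proof
  fix f assume f: "f \<in> props A"
  have "f x = f y" "f y = f z" using assms f unfolding fsame_def by blast+
  then show "f x = f z" by simp
qed
lemma fsd_trans:
  assumes "fsame A x y" "fdiff A y z" shows "fdiff A x z"
  unfolding fdiff_def
proof
  fix f assume f: "f \<in> props A"
  have "f x = f y" "f y \<noteq> f z" using assms f unfolding fsame_def fdiff_def by blast+
  then show "f x \<noteq> f z" by simp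
qed
lemma fds_trans:
  assumes "fdiff A x y" "fsame A y z" shows "fdiff A x z"
  unfolding fdiff_def
proof
  fix f assume f: "f \<in> props A"
  have "f x \<noteq> f y" "f y = f z" using assms f unfolding fsame_def fdiff_def by blast+
  then show "f x \<noteq> f z" by simp
qed
lemma fdd_trans:
  assumes "fdiff A x y" "fdiff A y z" shows "fsame A x z"
  unfolding fsame_def
proof
  fix f assume f: "f \<in> props A"
  have "f x \<noteq> f y" "f y \<noteq> f z" using assms f unfolding fdiff_def by blast+
  then show "f x = f z" by blast
qed
lemma fsame_fdiff:
  assumes "props A \<noteq> {}" "fsame A x y" "fdiff A x y" shows False
proof -
  obtain f where f: "f \<in> props A" using assms(1) by blast
  have "f x = f y" using assms(2) f unfolding fsame_def by blast
  moreover have "f x \<noteq> f y" using assms(3) f unfolding fdiff_def by blast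
  ultimately show False by simp
qed
lemma dig_fdiff: "(x,y) \<in> digs A \<Longrightarrow> fdiff A x y"
  unfolding fdiff_def by (intro ballI digs_diff)

lemma fdiff_arc_dig:
  assumes tdc: "three_dicritical V A" and "(x,y) \<in> A" "fdiff A x y"
  shows "(x,y) \<in> digs A"
proof -
  have "(y,x) \<in> A"
  proof (rule ccontr)
    assume "(y,x) \<notin> A"
    then obtain f where "f \<in> props A" "f x = f y" using fact1F[OF tdc assms(2)] by blast
    then show False using assms(3) unfolding fdiff_def by blast
  qed
  then show ?thesis using assms(2) unfolding digs_def by auto
qed

lemma side_bounds:
  assumes tdc: "three_dicritical V A" and F: "props A \<noteq> {}"
    and nocyc: "\<And>x y z. x \<in> V \<Longrightarrow> y \<in> V \<Longrightarrow> z \<in> V \<Longrightarrow> fsame A x y \<Longrightarrow> fsame A x z \<Longrightarrow>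
        (x,y) \<in> A \<Longrightarrow> (y,z) \<in> A \<Longrightarrow> (z,x) \<in> A \<Longrightarrow> False"
    and SV: "S \<subseteq> V" and Ssame: "\<And>a b. a \<in> S \<Longrightarrow> b \<in> S \<Longrightarrow> fsame A a b"
  shows "2 * card (A \<inter> S \<times> S) \<le> card S * card S - card S"
    "6 * card (A \<inter> S \<times> S) + 5 * card S \<le> 3 * card S * card S + 4"
proof -
  have fS: "finite S" using SV tdc_basic(1)[OF tdc] finite_subset by blast
  let ?R = "A \<inter> S \<times> S"
  have anti: "\<And>a b. (a,b) \<in> ?R \<Longrightarrow> (b,a) \<notin> ?R"
  proof -
    fix a b assume ab: "(a,b) \<in> ?R"
    show "(b,a) \<notin> ?R"
    proof
      assume "(b,a) \<in> ?R"
      then have "(a,b) \<in> digs A" using ab unfolding digs_def by auto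
      moreover have "fsame A a b" using Ssame ab by auto
      ultimately show False using same_not_dig[OF F] by blast
    qed
  qed
  show "2 * card ?R \<le> card S * card S - card S"
    by (rule antisym_card[OF fS _ anti]) auto
  have C5': "\<And>x y z. x \<in> S \<Longrightarrow> y \<in> S \<Longrightarrow> z \<in> S \<Longrightarrow> (x,y) \<in> A \<Longrightarrow> (x,z) \<in> A \<Longrightarrow> (z,y) \<in> A \<Longrightarrow> False"
  proof -
    fix x y z assume a: "x \<in> S" "y \<in> S" "z \<in> S" "(x,y) \<in> A" "(x,z) \<in> A" "(z,y) \<in> A"
    have v: "x \<in> V" "y \<in> V" "z \<in> V" using a(1-3) SV by auto
    show False by (rule C5[OF tdc F v Ssame[OF a(1,2)] Ssame[OF a(1,3)] a(4-6)])
  qed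
  have cyc': "\<And>x y z. x \<in> S \<Longrightarrow> y \<in> S \<Longrightarrow> z \<in> S \<Longrightarrow> (x,y) \<in> A \<Longrightarrow> (y,z) \<in> A \<Longrightarrow> (z,x) \<in> A \<Longrightarrow> False"
  proof -
    fix x y z assume a: "x \<in> S" "y \<in> S" "z \<in> S" "(x,y) \<in> A" "(y,z) \<in> A" "(z,x) \<in> A"
    have v: "x \<in> V" "y \<in> V" "z \<in> V" using a(1-3) SV by auto
    show False by (rule nocyc[OF v Ssame[OF a(1,2)] Ssame[OF a(1,3)] a(4-6)])
  qed
  show "6 * card ?R + 5 * card S \<le> 3 * card S * card S + 4"
  proof (rule triple_card[OF fS _ anti])
    show "?R \<subseteq> S \<times> S" by auto
    fix a b c assume abc: "a \<in> S" "b \<in> S" "c \<in> S" "a \<noteq> b" "b \<noteq> c" "a \<noteq> c"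
      and h1: "(a,b) \<in> ?R \<or> (b,a) \<in> ?R" and h2: "(b,c) \<in> ?R \<or> (c,b) \<in> ?R" and h3: "(a,c) \<in> ?R \<or> (c,a) \<in> ?R"
    from h1 h2 h3 show False
    proof (elim disjE)
      assume "(a,b) \<in> ?R" "(b,c) \<in> ?R" "(a,c) \<in> ?R" then show False using C5'[of a c b] abc by blast
    next
      assume "(a,b) \<in> ?R" "(b,c) \<in> ?R" "(c,a) \<in> ?R" then show False using cyc'[of a b c] abc by blast
    next
      assume "(a,b) \<in> ?R" "(c,b) \<in> ?R" "(a,c) \<in> ?R" then show False using C5'[of a b c] abc by blast
    next
      assume "(a,b) \<in> ?R" "(c,b) \<in> ?R" "(c,a) \<in> ?R" then show False using C5'[of c b a] abc by blast
    next
      assume "(b,a) \<in> ?R" "(b,c) \<in> ?R" "(a,c) \<in> ?R" then show False using C5'[of b c a] abc by blast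
    next
      assume "(b,a) \<in> ?R" "(b,c) \<in> ?R" "(c,a) \<in> ?R" then show False using C5'[of b a c] abc by blast
    next
      assume "(b,a) \<in> ?R" "(c,b) \<in> ?R" "(a,c) \<in> ?R" then show False using cyc'[of a c b] abc by blast
    next
      assume "(b,a) \<in> ?R" "(c,b) \<in> ?R" "(c,a) \<in> ?R" then show False using C5'[of c a b] abc by blast
    qed
  qed
qed

lemma class_bound_nat:
  assumes tdc: "three_dicritical V A" and F: "props A \<noteq> {}"
    and nocyc: "\<And>x y z. x \<in> V \<Longrightarrow> y \<in> V \<Longrightarrow> z \<in> V \<Longrightarrow> fsame A x y \<Longrightarrow> fsame A x z \<Longrightarrow>
        (x,y) \<in> A \<Longrightarrow> (y,z) \<in> A \<Longrightarrow> (z,x) \<in> A \<Longrightarrow> False"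
    and x0: "x0 \<in> V"
    and Kdef: "K = {y \<in> V. fsame A x0 y \<or> fdiff A x0 y}"
  shows "6 * card (A \<inter> K \<times> K) + 3 * card K \<le> 3 * card K * card K + 4 * card K"
proof -
  have fV: "finite V" using tdc_basic(1)[OF tdc] .
  define P where "P = {y \<in> V. fsame A x0 y}"
  define Q where "Q = {y \<in> V. fdiff A x0 y}"
  have KPQ: "K = P \<union> Q" unfolding Kdef P_def Q_def by auto
  have PQ: "P \<inter> Q = {}"
  proof (rule ccontr)
    assume "P \<inter> Q \<noteq> {}"
    then obtain y where "y \<in> P" "y \<in> Q" by blast
    then have "fsame A x0 y" "fdiff A x0 y" unfolding P_def Q_def by auto
    then show False using fsame_fdiff[OF F] by blast
  qed
  have fP: "finite P" "finite Q" using fV unfolding P_def Q_def by auto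
  have cK: "card K = card P + card Q" using KPQ PQ fP by (simp add: card_Un_disjoint)
  have x0P: "x0 \<in> P" unfolding P_def using x0 fsame_refl[of A x0] by simp
  have "card P > 0" using fP(1) x0P card_gt_0_iff by blast
  then have p1: "card P \<ge> 1" by simp
  have PV: "P \<subseteq> V" "Q \<subseteq> V" unfolding P_def Q_def by auto
  have Psame: "\<And>a b. a \<in> P \<Longrightarrow> b \<in> P \<Longrightarrow> fsame A a b"
  proof -
    fix a b assume "a \<in> P" "b \<in> P"
    then have h: "fsame A x0 a" "fsame A x0 b" unfolding P_def by auto
    show "fsame A a b" by (rule fsame_trans[OF fsame_sym[OF h(1)] h(2)])
  qed
  have Qsame: "\<And>a b. a \<in> Q \<Longrightarrow> b \<in> Q \<Longrightarrow> fsame A a b"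
  proof -
    fix a b assume "a \<in> Q" "b \<in> Q"
    then have h: "fdiff A x0 a" "fdiff A x0 b" unfolding Q_def by auto
    show "fsame A a b" by (rule fdd_trans[OF fdiff_sym[OF h(1)] h(2)])
  qed
  have PQdiff: "\<And>a b. a \<in> P \<Longrightarrow> b \<in> Q \<Longrightarrow> fdiff A a b"
  proof -
    fix a b assume "a \<in> P" "b \<in> Q"
    then have h: "fsame A x0 a" "fdiff A x0 b" unfolding P_def Q_def by auto
    show "fdiff A a b" by (rule fsd_trans[OF fsame_sym[OF h(1)] h(2)])
  qed
  have QPdiff: "\<And>a b. a \<in> Q \<Longrightarrow> b \<in> P \<Longrightarrow> fdiff A a b"
  proof -
    fix a b assume "a \<in> Q" "b \<in> P"
    then have h: "fdiff A x0 a" "fsame A x0 b" unfolding P_def Q_def by auto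
    show "fdiff A a b" by (rule fds_trans[OF fdiff_sym[OF h(1)] h(2)])
  qed
  have bP1: "2 * card (A \<inter> P \<times> P) \<le> card P * card P - card P"
    by (rule side_bounds(1)[OF tdc F nocyc PV(1) Psame])
  have bP2: "6 * card (A \<inter> P \<times> P) + 5 * card P \<le> 3 * card P * card P + 4"
    by (rule side_bounds(2)[OF tdc F nocyc PV(1) Psame])
  note bP = bP1 bP2
  have bQ1: "2 * card (A \<inter> Q \<times> Q) \<le> card Q * card Q - card Q"
    by (rule side_bounds(1)[OF tdc F nocyc PV(2) Qsame])
  have bQ2: "6 * card (A \<inter> Q \<times> Q) + 5 * card Q \<le> 3 * card Q * card Q + 4"
    by (rule side_bounds(2)[OF tdc F nocyc PV(2) Qsame])
  note bQ = bQ1 bQ2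
  define E where "E = digs A \<inter> K \<times> K"
  have fK: "finite K" using KPQ fP by auto
  have fE: "finite E" unfolding E_def using fK by auto
  have cover: "A \<inter> K \<times> K \<subseteq> (A \<inter> P \<times> P) \<union> (A \<inter> Q \<times> Q) \<union> E"
  proof
    fix e assume e: "e \<in> A \<inter> K \<times> K"
    obtain a b where ab: "e = (a,b)" by (cases e)
    have abK: "a \<in> K" "b \<in> K" "(a,b) \<in> A" using e ab by auto
    show "e \<in> (A \<inter> P \<times> P) \<union> (A \<inter> Q \<times> Q) \<union> E"
    proof (cases "a \<in> P")
      case aP: True
      show ?thesis
      proof (cases "b \<in> P")
        case True then show ?thesis using aP abK ab by auto
      next
        case False
        then have "b \<in> Q" using abK KPQ by auto
        then have "fdiff A a b" using PQdiff aP by blast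
        then have "(a,b) \<in> digs A" using fdiff_arc_dig[OF tdc abK(3)] by blast
        then show ?thesis using ab abK unfolding E_def by auto
      qed
    next
      case aQ0: False
      then have aQ: "a \<in> Q" using abK KPQ by auto
      show ?thesis
      proof (cases "b \<in> Q")
        case True then show ?thesis using aQ abK ab by auto
      next
        case False
        then have "b \<in> P" using abK KPQ by auto
        then have "fdiff A a b" using QPdiff aQ by blast
        then have "(a,b) \<in> digs A" using fdiff_arc_dig[OF tdc abK(3)] by blast
        then show ?thesis using ab abK unfolding E_def by auto
      qed
    qed
  qed
  have EPQ: "E \<subseteq> P \<times> Q \<union> Q \<times> P"
  proof
    fix e assume e: "e \<in> E"
    obtain a b where ab: "e = (a,b)" by (cases e)
    have d: "(a,b) \<in> digs A" "a \<in> K" "b \<in> K" using e ab unfolding E_def by auto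
    have fd: "fdiff A a b" using dig_fdiff[OF d(1)] .
    have "\<not> (a \<in> P \<and> b \<in> P)"
    proof
      assume "a \<in> P \<and> b \<in> P"
      then have "fsame A a b" using Psame by blast
      then show False using fsame_fdiff[OF F _ fd] by blast
    qed
    moreover have "\<not> (a \<in> Q \<and> b \<in> Q)"
    proof
      assume "a \<in> Q \<and> b \<in> Q"
      then have "fsame A a b" using Qsame by blast
      then show False using fsame_fdiff[OF F _ fd] by blast
    qed
    ultimately show "e \<in> P \<times> Q \<union> Q \<times> P" using d(2,3) KPQ ab by auto
  qed
  have cE1: "card E \<le> 2 * card P * card Q"
  proof -
    have "card E \<le> card (P \<times> Q \<union> Q \<times> P)" using card_mono[OF _ EPQ] fP by auto
    also have "\<dots> \<le> card (P \<times> Q) + card (Q \<times> P)" by (rule card_Un_le)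
    also have "\<dots> = 2 * card P * card Q" by (simp add: card_cartesian_product)
    finally show ?thesis .
  qed
  obtain f0 where f0: "f0 \<in> props A" using F by blast
  have cE2: "card E + 2 \<le> 2 * card K"
  proof (rule forest_card[OF fK _ _ _ _ ])
    show "K \<noteq> {}" using x0P KPQ by auto
    show "E \<subseteq> K \<times> K" unfolding E_def by auto
    show "\<And>x y. (x,y) \<in> E \<Longrightarrow> (y,x) \<in> E" unfolding E_def digs_def by auto
    show "\<And>x y. (x,y) \<in> E \<Longrightarrow> f0 x \<noteq> f0 y"
    proof -
      fix x y assume "(x,y) \<in> E"
      then have "(x,y) \<in> digs A" unfolding E_def by auto
      then show "f0 x \<noteq> f0 y" using f0 by (rule digs_diff)
    qed
    fix u v assume uv: "(u,v) \<in> E"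
    then have d: "(u,v) \<in> digs A" unfolding E_def by auto
    obtain h :: "'a \<Rightarrow> bool" where h: "h u = h v" "\<forall>a b. (a,b) \<in> digs A \<longrightarrow> {a,b} \<noteq> {u,v} \<longrightarrow> h a \<noteq> h b"
      using fact2[OF tdc d] by blast
    have "\<forall>a b. (a,b) \<in> E \<longrightarrow> {a,b} \<noteq> {u,v} \<longrightarrow> h a \<noteq> h b"
    proof (intro allI impI)
      fix a b assume ab: "(a,b) \<in> E" "{a,b} \<noteq> {u,v}"
      then have "(a,b) \<in> digs A" unfolding E_def by auto
      then show "h a \<noteq> h b" using h(2) ab(2) by blast
    qed
    then show "\<exists>h::'a\<Rightarrow>bool. h u = h v \<and> (\<forall>x y. (x,y) \<in> E \<longrightarrow> {x,y} \<noteq> {u,v} \<longrightarrow> h x \<noteq> h y)"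
      using h(1) by blast
  qed
  have cA: "card (A \<inter> K \<times> K) \<le> card (A \<inter> P \<times> P) + card (A \<inter> Q \<times> Q) + card E"
  proof -
    have "card (A \<inter> K \<times> K) \<le> card ((A \<inter> P \<times> P) \<union> (A \<inter> Q \<times> Q) \<union> E)"
      by (rule card_mono[OF _ cover]) (use fP fE in auto)
    also have "\<dots> \<le> card (A \<inter> P \<times> P) + card (A \<inter> Q \<times> Q) + card E"
      by (rule order_trans[OF card_Un_le add_le_mono1[OF card_Un_le]])
    finally show ?thesis .
  qed
  define p where "p = card P"
  define q where "q = card Q"
  define aP where "aP = card (A \<inter> P \<times> P)"
  define aQ where "aQ = card (A \<inter> Q \<times> Q)"
  define e where "e = card E"
  have tt: "card K * card K = p * p + 2 * (p * q) + q * q" using cK unfolding p_def q_def by (simp add: algebra_simps)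
  have pp: "p * p \<ge> p" "q * q \<ge> q" by simp_all
  note facts = cA[folded aP_def aQ_def e_def] cK[folded p_def q_def] bP[folded aP_def p_def] bQ[folded aQ_def q_def]
    cE1[folded e_def p_def q_def] cE2[folded e_def] p1[folded p_def]
  consider "q = 0" | "q = 1" | "p = 1 \<and> q \<ge> 2" | "p \<ge> 2 \<and> q \<ge> 2" using p1 unfolding p_def by linarith
  then show ?thesis
  proof cases
    case 1
    then have "e = 0" using facts by simp
    moreover have "p * q = 0" "q * q = 0" using 1 by simp_all
    ultimately show ?thesis using facts tt pp 1 by linarith
  next
    case 2
    then have "aQ = 0" using facts by simp
    moreover have "p * q = p" "q * q = 1" using 2 by simp_all
    ultimately show ?thesis using facts tt pp 2 by linarith
  next
    case 3
    then have "aP = 0" using facts by simp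
    moreover have "p * q = q" "p * p = 1" using 3 by simp_all
    ultimately show ?thesis using facts tt pp 3 by linarith
  next
    case 4
    have pq: "2 * p + 2 * q \<le> p * q + 4"
    proof -
      obtain p' q' where "p = p' + 2" "q = q' + 2" using 4 by (metis add.commute le_Suc_ex)
      then show ?thesis by (simp add: algebra_simps)
    qed
    show ?thesis using facts tt pp pq 4 by linarith
  qed
qed

lemma Kclass_eq:
  assumes "fsame A x y \<or> fdiff A x y"
  shows "(fsame A y z \<or> fdiff A y z) \<longleftrightarrow> (fsame A x z \<or> fdiff A x z)"
proof (cases "fsame A x y")
  case True
  have yx: "fsame A y x" using fsame_sym[OF True] .
  show ?thesis
  proof
    assume "fsame A y z \<or> fdiff A y z"
    then show "fsame A x z \<or> fdiff A x z"
    proof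
      assume "fsame A y z" then show ?thesis using fsame_trans[OF True] by blast
    next
      assume "fdiff A y z" then show ?thesis using fsd_trans[OF True] by blast
    qed
  next
    assume "fsame A x z \<or> fdiff A x z"
    then show "fsame A y z \<or> fdiff A y z"
    proof
      assume "fsame A x z" then show ?thesis using fsame_trans[OF yx] by blast
    next
      assume "fdiff A x z" then show ?thesis using fsd_trans[OF yx] by blast
    qed
  qed
next
  case False
  then have xy: "fdiff A x y" using assms by blast
  have yx: "fdiff A y x" using fdiff_sym[OF xy] .
  show ?thesis
  proof
    assume "fsame A y z \<or> fdiff A y z"
    then show "fsame A x z \<or> fdiff A x z"
    proof
      assume "fsame A y z" then show ?thesis using fds_trans[OF xy] by blast
    next
      assume "fdiff A y z" then show ?thesis using fdd_trans[OF xy] by blast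
    qed
  next
    assume "fsame A x z \<or> fdiff A x z"
    then show "fsame A y z \<or> fdiff A y z"
    proof
      assume "fsame A x z" then show ?thesis using fds_trans[OF yx] by blast
    next
      assume "fdiff A x z" then show ?thesis using fdd_trans[OF yx] by blast
    qed
  qed
qed

lemma case_main:
  assumes tdc: "three_dicritical V A" and F: "props A \<noteq> {}"
    and nocyc: "\<And>x y z. x \<in> V \<Longrightarrow> y \<in> V \<Longrightarrow> z \<in> V \<Longrightarrow> fsame A x y \<Longrightarrow> fsame A x z \<Longrightarrow>
        (x,y) \<in> A \<Longrightarrow> (y,z) \<in> A \<Longrightarrow> (z,x) \<in> A \<Longrightarrow> False"
  shows "real (card A) \<le> real (card V choose 2) + 2 / 3 * real (card V)"
proof -
  have fV: "finite V" using tdc_basic(1)[OF tdc] .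
  have AV: "A \<subseteq> V \<times> V" using tdc_basic(2)[OF tdc] .
  define n where "n = card V"
  define K where "K x = {y \<in> V. fsame A x y \<or> fdiff A x y}" for x
  have K1: "\<And>x. x \<in> V \<Longrightarrow> x \<in> K x" unfolding K_def by (simp add: fsame_refl)
  have K2: "\<And>x. K x \<subseteq> V" unfolding K_def by blast
  have K3: "\<And>x y. x \<in> V \<Longrightarrow> y \<in> K x \<Longrightarrow> K y = K x"
  proof -
    fix x y assume "x \<in> V" "y \<in> K x"
    then have h: "fsame A x y \<or> fdiff A x y" unfolding K_def by blast
    show "K y = K x" unfolding K_def using Kclass_eq[OF h] by blast
  qed
  have Ksym: "\<And>x y. x \<in> V \<Longrightarrow> y \<in> V \<Longrightarrow> y \<in> K x \<Longrightarrow> x \<in> K y"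
  proof -
    fix x y assume xy: "x \<in> V" "y \<in> V" "y \<in> K x"
    then have "K y = K x" using K3 by blast
    then show "x \<in> K y" using K1[OF xy(1)] by simp
  qed
  have fK: "\<And>x. finite (K x)" using K2 fV finite_subset by blast
  define inn where "inn x = card {y \<in> K x. (x,y) \<in> A}" for x
  define out where "out x = card {y \<in> V - K x. (x,y) \<in> A}" for x
  have cardA: "card A = (\<Sum>x\<in>V. inn x + out x)"
  proof -
    have "A = Sigma V (\<lambda>x. {y \<in> V. (x,y) \<in> A})" using AV by auto
    then have "card A = (\<Sum>x\<in>V. card {y \<in> V. (x,y) \<in> A})"
      using card_SigmaI[OF fV, of "\<lambda>x. {y \<in> V. (x,y) \<in> A}"] fV by simp
    also have "\<dots> = (\<Sum>x\<in>V. inn x + out x)"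
    proof (rule sum.cong[OF refl])
      fix x assume x: "x \<in> V"
      have "{y \<in> V. (x,y) \<in> A} = {y \<in> K x. (x,y) \<in> A} \<union> {y \<in> V - K x. (x,y) \<in> A}" using K2 by blast
      moreover have "{y \<in> K x. (x,y) \<in> A} \<inter> {y \<in> V - K x. (x,y) \<in> A} = {}" by blast
      ultimately show "card {y \<in> V. (x,y) \<in> A} = inn x + out x"
        unfolding inn_def out_def using fK fV by (simp add: card_Un_disjoint)
    qed
    finally show ?thesis .
  qed
  define C where "C = Sigma V (\<lambda>x. V - K x)"
  have fC: "finite C" unfolding C_def using fV by auto
  have cC: "card C = (\<Sum>x\<in>V. n - card (K x))"
    unfolding C_def n_def using card_SigmaI[OF fV, of "\<lambda>x. V - K x"] fV K2
    by (simp add: card_Diff_subset fK)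
  have AC: "A \<inter> C = Sigma V (\<lambda>x. {y \<in> V - K x. (x,y) \<in> A})" unfolding C_def by auto
  have cAC: "card (A \<inter> C) = (\<Sum>x\<in>V. out x)"
    unfolding AC out_def using card_SigmaI[OF fV, of "\<lambda>x. {y \<in> V - K x. (x,y) \<in> A}"] fV by simp
  have out_bound: "2 * (\<Sum>x\<in>V. out x) \<le> (\<Sum>x\<in>V. n - card (K x))"
  proof -
    have "2 * card ((A \<inter> C) \<inter> C) \<le> card C"
    proof (rule half_card[OF fC])
      show "\<And>x y. (x,y) \<in> C \<Longrightarrow> (y,x) \<in> C" unfolding C_def using Ksym by blast
      fix x y assume xy: "(x,y) \<in> A \<inter> C"
      show "(y,x) \<notin> A \<inter> C"
      proof
        assume yx: "(y,x) \<in> A \<inter> C"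
        then have "(x,y) \<in> digs A" using xy unfolding digs_def by auto
        then have "fdiff A x y" by (rule dig_fdiff)
        then have "y \<in> K x" using xy unfolding K_def C_def by auto
        then show False using xy unfolding C_def by auto
      qed
    qed
    moreover have "(A \<inter> C) \<inter> C = A \<inter> C" by blast
    ultimately show ?thesis using cC cAC by simp
  qed
  have inn_bound: "\<And>x. x \<in> V \<Longrightarrow> (\<Sum>y\<in>K x. real (inn y)) / real (card (K x)) \<le> (3 * real (card (K x)) + 1) / 6"
  proof -
    fix x assume x: "x \<in> V"
    have "(\<Sum>y\<in>K x. inn y) = (\<Sum>y\<in>K x. card {z \<in> K x. (y,z) \<in> A})"
      unfolding inn_def using K3[OF x] by (intro sum.cong) auto
    also have "\<dots> = card (Sigma (K x) (\<lambda>y. {z \<in> K x. (y,z) \<in> A}))"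
      using card_SigmaI[OF fK, of x "\<lambda>y. {z \<in> K x. (y,z) \<in> A}"] fK by simp
    also have "Sigma (K x) (\<lambda>y. {z \<in> K x. (y,z) \<in> A}) = A \<inter> K x \<times> K x" by auto
    finally have s: "(\<Sum>y\<in>K x. inn y) = card (A \<inter> K x \<times> K x)" .
    have cb: "6 * card (A \<inter> K x \<times> K x) + 3 * card (K x) \<le> 3 * card (K x) * card (K x) + 4 * card (K x)"
      apply (rule class_bound_nat[OF tdc F _ x])
       apply (fact nocyc)
      by (simp add: K_def)
    have t0: "real (card (K x)) > 0" using K1[OF x] fK card_gt_0_iff by fastforce
    have "6 * real (card (A \<inter> K x \<times> K x)) + 3 * real (card (K x)) \<le> 3 * real (card (K x)) * real (card (K x)) + 4 * real (card (K x))"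
      using cb by (metis (mono_tags, lifting) of_nat_add of_nat_le_iff of_nat_mult of_nat_numeral)
    then have "real (card (A \<inter> K x \<times> K x)) \<le> real (card (K x)) * ((3 * real (card (K x)) + 1) / 6)"
      by (simp add: algebra_simps)
    then have "real (card (A \<inter> K x \<times> K x)) / real (card (K x)) \<le> (3 * real (card (K x)) + 1) / 6"
      using t0 by (simp add: divide_le_eq mult.commute)
    moreover have "(\<Sum>y\<in>K x. real (inn y)) = real (card (A \<inter> K x \<times> K x))"
      using s by (metis of_nat_sum)
    ultimately show "(\<Sum>y\<in>K x. real (inn y)) / real (card (K x)) \<le> (3 * real (card (K x)) + 1) / 6" by simp
  qed
  have avg: "(\<Sum>x\<in>V. real (inn x)) = (\<Sum>x\<in>V. (\<Sum>y\<in>K x. real (inn y)) / real (card (K x)))"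
    by (rule avg_sum[OF fV K1 K2 K3])
  have "real (card A) = (\<Sum>x\<in>V. real (inn x)) + (\<Sum>x\<in>V. real (out x))"
    using cardA by (simp add: sum.distrib)
  also have "(\<Sum>x\<in>V. real (inn x)) \<le> (\<Sum>x\<in>V. (3 * real (card (K x)) + 1) / 6)"
    unfolding avg by (rule sum_mono) (use inn_bound in blast)
  also have "(\<Sum>x\<in>V. real (out x)) \<le> (\<Sum>x\<in>V. (real n - real (card (K x))) / 2)"
  proof -
    have "2 * (\<Sum>x\<in>V. real (out x)) \<le> (\<Sum>x\<in>V. real (n - card (K x)))"
    proof -
      have r: "real (2 * (\<Sum>x\<in>V. out x)) \<le> real (\<Sum>x\<in>V. n - card (K x))"
        using out_bound by (simp only: of_nat_le_iff)
      then show ?thesis unfolding of_nat_mult of_nat_sum by simp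
    qed
    also have "\<dots> = (\<Sum>x\<in>V. real n - real (card (K x)))"
    proof (rule sum.cong[OF refl])
      fix x assume "x \<in> V"
      have "card (K x) \<le> n" unfolding n_def using card_mono[OF fV K2] .
      then show "real (n - card (K x)) = real n - real (card (K x))" by (simp add: of_nat_diff)
    qed
    finally show ?thesis by (simp add: sum_divide_distrib[symmetric])
  qed
  finally have "real (card A) \<le> (\<Sum>x\<in>V. (3 * real (card (K x)) + 1) / 6 + (real n - real (card (K x))) / 2)"
    by (simp add: sum.distrib)
  also have "\<dots> = (\<Sum>x\<in>V. (3 * real n + 1) / 6)" by (rule sum.cong) (auto simp: field_simps)
  also have "\<dots> = real n * (3 * real n + 1) / 6" unfolding n_def by simp
  also have "\<dots> = real (card V choose 2) + 2 / 3 * real (card V)"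
    unfolding n_def real_choose2 by (simp add: field_simps)
  finally show ?thesis .
qed

lemma w3_iso:
  assumes "V = {x,y,z,w}" "x \<noteq> y" "y \<noteq> z" "x \<noteq> z" "w \<noteq> x" "w \<noteq> y" "w \<noteq> z"
    "A = {(w,x),(x,w),(w,y),(y,w),(w,z),(z,w),(x,y),(y,z),(z,x)}"
  shows "digraph_iso V A W3_V W3_A"
proof -
  define f where "f v = (if v = x then 0 else if v = y then 1 else if v = z then 2 else (3::nat))" for v
  have "bij_betw f V W3_V"
    unfolding bij_betw_def inj_on_def W3_V_def f_def using assms(1-7) by auto
  moreover have "\<forall>u\<in>V. \<forall>v\<in>V. (u, v) \<in> A \<longleftrightarrow> (f u, f v) \<in> W3_A"
    unfolding W3_A_def f_def using assms by auto
  ultimately show ?thesis unfolding digraph_iso_def by blast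
qed

lemma case_cyc:
  assumes tdc: "three_dicritical V A" and F: "props A \<noteq> {}"
    and V: "x \<in> V" "y \<in> V" "z \<in> V" and s: "fsame A x y" "fsame A x z"
    and arcs: "(x,y) \<in> A" "(y,z) \<in> A" "(z,x) \<in> A"
    and niso: "\<not> digraph_iso V A W3_V W3_A"
  shows "real (card A) \<le> real (card V choose 2) + 2 / 3 * real (card V)"
proof -
  have fV: "finite V" using tdc_basic(1)[OF tdc] .
  have AV: "A \<subseteq> V \<times> V" using tdc_basic(2)[OF tdc] .
  have syz: "fsame A y z" by (rule fsame_trans[OF fsame_sym[OF s(1)] s(2)])
  have dist: "x \<noteq> y" "y \<noteq> z" "z \<noteq> x" using arcs tdc_basic(3)[OF tdc] by auto
  define T where "T = {(x,y),(y,z),(z,x)}"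
  have AT: "A \<subseteq> digs A \<union> T"
  proof
    fix e assume e: "e \<in> A"
    obtain a b where ab: "e = (a,b)" by (cases e)
    show "e \<in> digs A \<union> T"
    proof (cases "(b,a) \<in> A")
      case True then show ?thesis using e ab unfolding digs_def by auto
    next
      case False
      have "(a,b) \<in> T" unfolding T_def by (rule C6[OF tdc V s arcs]) (use e ab False in auto)
      then show ?thesis using ab by auto
    qed
  qed
  have fD: "finite (digs A)" using AV fV unfolding digs_def by (auto intro: finite_subset)
  have cT: "card T \<le> 3" unfolding T_def by (rule order_trans[OF card_ins_le], simp, rule order_trans[OF card_ins_le], simp)
  have cA: "card A \<le> card (digs A) + 3"
  proof -
    have "card A \<le> card (digs A \<union> T)" by (rule card_mono[OF _ AT]) (use fD in \<open>auto simp: T_def\<close>)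
    also have "\<dots> \<le> card (digs A) + card T" by (rule card_Un_le)
    finally show ?thesis using cT by simp
  qed
  obtain f0 where f0: "f0 \<in> props A" using F by blast
  have forest: "card (digs A) + 2 \<le> 2 * card V"
  proof (rule forest_card[OF fV])
    show "V \<noteq> {}" using V by auto
    show "digs A \<subseteq> V \<times> V" using AV unfolding digs_def by auto
    show "\<And>a b. (a,b) \<in> digs A \<Longrightarrow> (b,a) \<in> digs A" unfolding digs_def by auto
    show "\<And>a b. (a,b) \<in> digs A \<Longrightarrow> f0 a \<noteq> f0 b"
    proof -
      fix a b assume "(a,b) \<in> digs A"
      then show "f0 a \<noteq> f0 b" using f0 by (rule digs_diff)
    qed
    fix u v assume uv: "(u,v) \<in> digs A"
    show "\<exists>h::'a\<Rightarrow>bool. h u = h v \<and> (\<forall>a b. (a,b) \<in> digs A \<longrightarrow> {a,b} \<noteq> {u,v} \<longrightarrow> h a \<noteq> h b)"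
      by (rule fact2[OF tdc uv])
  qed
  have Xsame: "\<And>a b. a \<in> {x,y,z} \<Longrightarrow> b \<in> {x,y,z} \<Longrightarrow> fsame A a b"
  proof -
    fix a b assume a: "a \<in> {x,y,z}" and b: "b \<in> {x,y,z}"
    have xa: "fsame A x a" using a s fsame_refl[of A x] by auto
    have xb: "fsame A x b" using b s fsame_refl[of A x] by auto
    show "fsame A a b" by (rule fsame_trans[OF fsame_sym[OF xa] xb])
  qed
  have nodig: "\<And>a b. (a,b) \<in> digs A \<Longrightarrow> a \<in> {x,y,z} \<Longrightarrow> b \<in> {x,y,z} \<Longrightarrow> False"
  proof -
    fix a b assume d: "(a,b) \<in> digs A" and a: "a \<in> {x,y,z}" and b: "b \<in> {x,y,z}"
    have "fsame A a b" using Xsame[OF a b] .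
    then show False using same_not_dig[OF F] d by blast
  qed
  have XV: "{x,y,z} \<subseteq> V" using V by auto
  have c3: "card {x,y,z} = 3" using dist by auto
  have n3: "card V \<ge> 3" using card_mono[OF fV XV] c3 by simp
  consider "card V = 3" | "card V = 4" | "card V \<ge> 5" using n3 by linarith
  then show ?thesis
  proof cases
    case 1
    have VX: "V = {x,y,z}" using card_subset_eq[OF fV XV] c3 1 by simp
    have "digs A = {}"
    proof (rule ccontr)
      assume "digs A \<noteq> {}"
      then obtain a b where d: "(a,b) \<in> digs A" by auto
      then have "a \<in> V" "b \<in> V" using AV unfolding digs_def by auto
      then show False using nodig[OF d] VX by auto
    qed
    then have "card A \<le> 3" using cA by simp
    then show ?thesis using 1 by (simp add: real_choose2)
  next
    case 3
    have "card A \<le> 2 * card V + 1" using cA forest by linarith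
    then have "real (card A) \<le> real (2 * card V + 1)" by (simp only: of_nat_le_iff)
    then have r: "real (card A) \<le> 2 * real (card V) + 1" by simp
    have "(real (card V) - 5) * (3 * real (card V) + 4) \<ge> 0" using 3 by simp
    then have h: "3 * (real (card V) * real (card V)) \<ge> 11 * real (card V) + 20"
      by (simp add: algebra_simps)
    have e: "real (card V) * (real (card V) - 1) / 2 + 2 / 3 * real (card V) = (3 * (real (card V) * real (card V)) + real (card V)) / 6"
      by (simp add: field_simps)
    have "2 * real (card V) + 1 \<le> real (card V) * (real (card V) - 1) / 2 + 2 / 3 * real (card V)"
    proof -
      define N where "N = real (card V) * real (card V)"
      have h': "3 * N \<ge> 11 * real (card V) + 20" using h unfolding N_def .
      have "6 * (2 * real (card V) + 1) \<le> 3 * N + real (card V)" using h' by (simp add: algebra_simps)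
      then have "2 * real (card V) + 1 \<le> (3 * N + real (card V)) / 6" by (simp add: le_divide_eq)
      then show ?thesis unfolding e N_def .
    qed
    then show ?thesis using r by (simp add: real_choose2)
  next
    case 2
    have "V - {x,y,z} \<noteq> {}"
    proof
      assume "V - {x,y,z} = {}"
      then have "V = {x,y,z}" using XV by auto
      then show False using 2 c3 by simp
    qed
    then obtain w where w: "w \<in> V" "w \<notin> {x,y,z}" by blast
    have wd: "w \<noteq> x" "w \<noteq> y" "w \<noteq> z" using w by auto
    have X4: "{x,y,z,w} \<subseteq> V" using XV w by auto
    have c4: "card {x,y,z,w} = 4" using dist wd by auto
    have VX: "V = {x,y,z,w}" using card_subset_eq[OF fV X4] c4 2 by simp
    define S6 where "S6 = {(w,x),(x,w),(w,y),(y,w),(w,z),(z,w)}"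
    have cS6: "card S6 \<le> 6"
    proof -
      have "S6 = set [(w,x),(x,w),(w,y),(y,w),(w,z),(z,w)]" unfolding S6_def by simp
      then show ?thesis using card_length[of "[(w,x),(x,w),(w,y),(y,w),(w,z),(z,w)]"] by simp
    qed
    have DS: "digs A \<subseteq> S6"
    proof
      fix e assume e: "e \<in> digs A"
      obtain a b where ab: "e = (a,b)" by (cases e)
      have d: "(a,b) \<in> digs A" using e ab by simp
      have abV: "a \<in> V" "b \<in> V" "a \<noteq> b" using d AV tdc_basic(3)[OF tdc] unfolding digs_def by auto
      have "\<not> (a \<in> {x,y,z} \<and> b \<in> {x,y,z})" using nodig[OF d] by blast
      then show "e \<in> S6" using abV ab VX unfolding S6_def by auto
    qed
    show ?thesis
    proof (cases "card (digs A) \<le> 4")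
      case True
      then have "card A \<le> 7" using cA by simp
      then show ?thesis using 2 by (simp add: real_choose2)
    next
      case False
      have DeqS: "digs A = S6"
      proof (rule ccontr)
        assume "digs A \<noteq> S6"
        then obtain a b where ab: "(a,b) \<in> S6" "(a,b) \<notin> digs A" using DS by auto
        have ba: "(b,a) \<in> S6" "(b,a) \<notin> digs A" using ab unfolding S6_def digs_def by auto
        have neq: "(a,b) \<noteq> (b,a)" using ab(1) wd unfolding S6_def by auto
        have "digs A \<subseteq> S6 - {(a,b),(b,a)}" using DS ab ba by auto
        then have "card (digs A) \<le> card (S6 - {(a,b),(b,a)})"
          by (rule card_mono[rotated]) (simp add: S6_def)
        also have "\<dots> = card S6 - 2"
          using ab(1) ba(1) neq by (simp add: card_Diff_subset S6_def[symmetric])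
        finally show False using cS6 False by linarith
      qed
      have "A = {(w,x),(x,w),(w,y),(y,w),(w,z),(z,w),(x,y),(y,z),(z,x)}"
      proof
        show "A \<subseteq> {(w,x),(x,w),(w,y),(y,w),(w,z),(z,w),(x,y),(y,z),(z,x)}"
          using AT DeqS unfolding S6_def T_def by auto
        have "S6 \<subseteq> A" using DeqS unfolding digs_def by auto
        then show "{(w,x),(x,w),(w,y),(y,w),(w,z),(z,w),(x,y),(y,z),(z,x)} \<subseteq> A"
          using arcs unfolding S6_def by auto
      qed
      then have "digraph_iso V A W3_V W3_A"
        using w3_iso[OF VX dist(1,2) dist(3)[symmetric] wd] by blast
      then show ?thesis using niso by simp
    qed
  qed
qed

theorem theorem12:
  fixes V :: "'a set" and A :: "('a \<times> 'a) set"
  assumes "three_dicritical V A"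
    and "\<not> digraph_iso V A K3_V K3_A"
    and "\<not> digraph_iso V A W3_V W3_A"
  shows "real (card A) \<le> real (card V choose 2) + 2 / 3 * real (card V)"
proof (cases "props A = {}")
  case True
  then show ?thesis using case_noF[OF assms(1) True assms(2)] by blast
next
  case F: False
  show ?thesis
  proof (cases "\<exists>x y z. x \<in> V \<and> y \<in> V \<and> z \<in> V \<and> fsame A x y \<and> fsame A x z \<and> (x,y) \<in> A \<and> (y,z) \<in> A \<and> (z,x) \<in> A")
    case True
    then obtain x y z where h: "x \<in> V" "y \<in> V" "z \<in> V" "fsame A x y" "fsame A x z" "(x,y) \<in> A" "(y,z) \<in> A" "(z,x) \<in> A"
      by blast
    show ?thesis by (rule case_cyc[OF assms(1) F h assms(3)])
  next
    case False
    have nocyc: "\<And>x y z. x \<in> V \<Longrightarrow> y \<in> V \<Longrightarrow> z \<in> V \<Longrightarrow> fsame A x y \<Longrightarrow> fsame A x z \<Longrightarrow>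
        (x,y) \<in> A \<Longrightarrow> (y,z) \<in> A \<Longrightarrow> (z,x) \<in> A \<Longrightarrow> False"
      using False by blast
    show ?thesis
      apply (rule case_main[OF assms(1) F])
      by (fact nocyc)
  qed
qed

end
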